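(* Let $X=\operatorname{diag}(x_1,\dots,x_s)$ and $Y=\operatorname{diag}(y_1,\dots,y_s)$ be real diagonal matrices. The following are equivalent: (i) there exist unitary $U,V\in \mathcal U(s)$ such that $XUY=V$; (ii) there exists a permutation $\sigma$ of $\{1,\dots,s\}$ such that $|x_iy_{\sigma(i)}|=1$ for every $i\in\{1,\dots,s\}$.
   Context: $\mathcal U(s)$ denotes the group of $s\times s$ complex unitary matrices. *)

theory Defs
  imports "HOL-Analysis.Analysis"
begin

definition cmat_adjoint :: "complex^'n^'n \<Rightarrow> complex^'n^'n" where
  "cmat_adjoint U = (\<chi> i j. cnj (U $ j $ i))"

definition unitary_mat :: "complex^'n^'n \<Rightarrow> bool" where
  "unitary_mat U \<longleftrightarrow> U ** cmat_adjoint U = mat 1 \<and> cmat_adjoint U ** U = mat 1"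

definition real_diag :: "('n \<Rightarrow> real) \<Rightarrow> complex^'n^'n" where
  "real_diag x = (\<chi> i j. if i = j then complex_of_real (x i) else 0)"

end

theory Submission
  imports Defs
begin

lemma diag_entry:
  fixes U :: "complex^'n::finite^'n"
  shows "(real_diag x ** U ** real_diag y) $ i $ j = of_real (x i) * U $ i $ j * of_real (y j)"
proof -
  have "(real_diag x ** U) $ i $ k = of_real (x i) * U $ i $ k" for k
  proof -
    have "(real_diag x ** U) $ i $ k = (\<Sum>l\<in>UNIV. if l = i then of_real (x i) * U $ i $ k else 0)"
      unfolding matrix_matrix_mult_def vec_lambda_beta by (intro sum.cong) (auto simp: real_diag_def)
    then show ?thesis by simp
  qed
  then have "(real_diag x ** U ** real_diag y) $ i $ j = (\<Sum>l\<in>UNIV. if l = j then of_real (x i) * U $ i $ j * of_real (y j) else 0)"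
    unfolding matrix_matrix_mult_def[of "real_diag x ** U"] vec_lambda_beta
    by (intro sum.cong) (auto simp: real_diag_def)
  then show ?thesis by simp
qed

lemma unitary_sums:
  fixes U :: "complex^'n::finite^'n"
  assumes "unitary_mat U"
  shows "(\<Sum>j\<in>UNIV. (cmod (U$i$j))^2) = 1" "(\<Sum>i\<in>UNIV. (cmod (U$i$j))^2) = 1"
proof -
  have "(U ** cmat_adjoint U) $ i $ i = 1" using assms by (simp add: unitary_mat_def mat_def)
  then have "(\<Sum>k\<in>UNIV. U$i$k * cnj (U$i$k)) = 1"
    by (simp add: matrix_matrix_mult_def cmat_adjoint_def)
  then have "(\<Sum>k\<in>UNIV. complex_of_real ((cmod (U$i$k))^2)) = 1"
    by (simp add: complex_norm_square[symmetric])
  then have "complex_of_real (\<Sum>k\<in>UNIV. (cmod (U$i$k))^2) = complex_of_real 1"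
    by simp
  then show "(\<Sum>j\<in>UNIV. (cmod (U$i$j))^2) = 1" using of_real_eq_iff by blast
  have "(cmat_adjoint U ** U) $ j $ j = 1" using assms by (simp add: unitary_mat_def mat_def)
  then have "(\<Sum>k\<in>UNIV. cnj (U$k$j) * U$k$j) = 1"
    by (simp add: matrix_matrix_mult_def cmat_adjoint_def)
  then have "(\<Sum>k\<in>UNIV. complex_of_real ((cmod (U$k$j))^2)) = 1"
    by (simp add: complex_norm_square[symmetric] mult.commute)
  then have "complex_of_real (\<Sum>k\<in>UNIV. (cmod (U$k$j))^2) = complex_of_real 1"
    by simp
  then show "(\<Sum>i\<in>UNIV. (cmod (U$i$j))^2) = 1" using of_real_eq_iff by blast
qed

lemma perm_unitary:
  fixes s :: "'n::finite \<Rightarrow> complex"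
  assumes p: "\<sigma> permutes (UNIV::'n set)" and s: "\<And>i. cmod (s i) = 1"
  shows "unitary_mat ((\<chi> i j. if j = \<sigma> i then s i else 0) :: complex^'n^'n)"
proof -
  let ?P = "(\<chi> i j. if j = \<sigma> i then s i else 0) :: complex^'n^'n"
  have ss: "s i * cnj (s i) = 1" for i
    using s[of i] by (simp add: complex_norm_square[symmetric])
  have inj: "\<sigma> i = \<sigma> k \<longleftrightarrow> i = k" for i k
    using p by (metis permutes_inverses(2))
  have 1: "?P ** cmat_adjoint ?P = mat 1"
  proof (rule vec_eq_iff[THEN iffD2], intro allI, rule vec_eq_iff[THEN iffD2], intro allI)
    fix i k
    have "(?P ** cmat_adjoint ?P) $ i $ k =
        (\<Sum>j\<in>UNIV. if j = \<sigma> i then (if \<sigma> i = \<sigma> k then s i * cnj (s k) else 0) else 0)"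
      unfolding matrix_matrix_mult_def vec_lambda_beta cmat_adjoint_def by (intro sum.cong) (auto simp: )
    also have "\<dots> = (if i = k then 1 else 0)" using inj ss by simp
    finally show "(?P ** cmat_adjoint ?P) $ i $ k = mat 1 $ i $ k" by (simp add: mat_def)
  qed
  have 2: "cmat_adjoint ?P ** ?P = mat 1"
  proof (rule vec_eq_iff[THEN iffD2], intro allI, rule vec_eq_iff[THEN iffD2], intro allI)
    fix i k
    have eq: "i = \<sigma> j \<longleftrightarrow> j = inv \<sigma> i" for j
      using p by (metis permutes_inverses(1) permutes_inverses(2))
    have "(cmat_adjoint ?P ** ?P) $ i $ k =
        (\<Sum>j\<in>UNIV. if j = inv \<sigma> i then (if i = k then cnj (s j) * s j else 0) else 0)"
      unfolding matrix_matrix_mult_def vec_lambda_beta cmat_adjoint_def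
    proof (intro sum.cong refl)
      fix j
      show "cnj (if i = \<sigma> j then s j else 0) * (if k = \<sigma> j then s j else 0) =
        (if j = inv \<sigma> i then (if i = k then cnj (s j) * s j else 0) else 0)"
      proof (cases "j = inv \<sigma> i")
        case True
        then have "\<sigma> j = i" using permutes_inverses(1)[OF p] by simp
        then show ?thesis using True by auto
      next
        case False
        then have "i \<noteq> \<sigma> j" using eq by blast
        then show ?thesis using False by auto
      qed
    qed
    also have "\<dots> = (if i = k then 1 else 0)" using ss by (simp add: mult.commute)
    finally show "(cmat_adjoint ?P ** ?P) $ i $ k = mat 1 $ i $ k" by (simp add: mat_def)
  qed
  show ?thesis using 1 2 by (simp add: unitary_mat_def)
qed

lemma core:
  fixes a b :: "'n::finite \<Rightarrow> real" and B :: "'n \<Rightarrow> 'n \<Rightarrow> real"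
  assumes B0: "\<And>i j. B i j \<ge> 0" and a0: "\<And>i. a i \<ge> 0" and b0: "\<And>j. b j \<ge> 0"
  and r: "\<And>i. (\<Sum>j\<in>UNIV. B i j) = 1" and c: "\<And>j. (\<Sum>i\<in>UNIV. B i j) = 1"
  and R: "\<And>i. (\<Sum>j\<in>UNIV. a i * B i j * b j) = 1"
  and C: "\<And>j. (\<Sum>i\<in>UNIV. a i * B i j * b j) = 1"
  shows "\<exists>\<sigma>. \<sigma> permutes (UNIV::'n set) \<and> (\<forall>i. a i * b (\<sigma> i) = 1)"
proof -
  have apos: "a i > 0" for i
  proof (rule ccontr)
    assume "\<not> a i > 0" then have "a i = 0" using a0[of i] by simp
    then show False using R[of i] by simp
  qed
  have bpos: "b j > 0" for j
  proof (rule ccontr)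
    assume "\<not> b j > 0" then have "b j = 0" using b0[of j] by simp
    then show False using C[of j] by simp
  qed
  have S1: "(\<Sum>i\<in>UNIV. \<Sum>j\<in>UNIV. B i j * a i * (b j)^2) = (\<Sum>j\<in>UNIV. b j)"
  proof -
    have "(\<Sum>i\<in>UNIV. \<Sum>j\<in>UNIV. B i j * a i * (b j)^2) = (\<Sum>j\<in>UNIV. \<Sum>i\<in>UNIV. B i j * a i * (b j)^2)"
      by (rule sum.swap)
    also have "\<dots> = (\<Sum>j\<in>UNIV. b j * (\<Sum>i\<in>UNIV. a i * B i j * b j))"
      by (simp add: sum_distrib_left power2_eq_square mult_ac)
    also have "\<dots> = (\<Sum>j\<in>UNIV. b j)" using C by simp
    finally show ?thesis .
  qed
  have S2: "(\<Sum>i\<in>UNIV. \<Sum>j\<in>UNIV. B i j * b j) = (\<Sum>j\<in>UNIV. b j)"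
  proof -
    have "(\<Sum>i\<in>UNIV. \<Sum>j\<in>UNIV. B i j * b j) = (\<Sum>j\<in>UNIV. \<Sum>i\<in>UNIV. B i j * b j)"
      by (rule sum.swap)
    also have "\<dots> = (\<Sum>j\<in>UNIV. b j * (\<Sum>i\<in>UNIV. B i j))"
      by (simp add: sum_distrib_left mult_ac)
    also have "\<dots> = (\<Sum>j\<in>UNIV. b j)" using c by simp
    finally show ?thesis .
  qed
  have S3: "(\<Sum>i\<in>UNIV. \<Sum>j\<in>UNIV. B i j / a i) = (\<Sum>j\<in>UNIV. b j)"
  proof -
    have "(\<Sum>j\<in>UNIV. B i j / a i) = (\<Sum>j\<in>UNIV. B i j * b j)" for i
    proof -
      have "(\<Sum>j\<in>UNIV. B i j / a i) = 1 / a i" using r[of i] by (simp add: sum_divide_distrib[symmetric])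
      also have "\<dots> = (\<Sum>j\<in>UNIV. B i j * b j)"
      proof -
        have "a i * (\<Sum>j\<in>UNIV. B i j * b j) = 1" using R[of i] by (simp add: sum_distrib_left mult_ac)
        then show ?thesis using apos[of i] by (simp add: field_simps)
      qed
      finally show ?thesis .
    qed
    then show ?thesis using S2 by simp
  qed
  have pt: "B i j * (a i * b j - 1)^2 / a i = B i j * a i * (b j)^2 - 2 * (B i j * b j) + B i j / a i" for i j
    using apos[of i] by (simp add: field_simps power2_eq_square)
  have tot: "(\<Sum>i\<in>UNIV. \<Sum>j\<in>UNIV. B i j * (a i * b j - 1)^2 / a i) = 0"
    by (simp add: pt sum.distrib sum_subtractf sum_distrib_left[symmetric] S1 S2 S3)
  have nn: "B i j * (a i * b j - 1)^2 / a i \<ge> 0" for i j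
    using B0[of i j] apos[of i] by simp
  have zero: "B i j * (a i * b j - 1)^2 / a i = 0" for i j
  proof -
    have "\<forall>i\<in>UNIV. (\<Sum>j\<in>UNIV. B i j * (a i * b j - 1)^2 / a i) = 0"
      using tot by (subst sum_nonneg_eq_0_iff[symmetric]) (auto intro: sum_nonneg nn)
    then have "(\<Sum>j\<in>UNIV. B i j * (a i * b j - 1)^2 / a i) = 0" by simp
    then show ?thesis using nn by (simp add: sum_nonneg_eq_0_iff)
  qed
  have supp: "B i j \<noteq> 0 \<Longrightarrow> a i * b j = 1" for i j
    using zero[of i j] apos[of i] by simp
  define I where "I c = {i. a i = c}" for c
  define J where "J c = {j. c * b j = 1}" for c
  have card_eq: "card (I c) = card (J c)" for c
  proof -
    have "real (card (I c)) = (\<Sum>i\<in>I c. \<Sum>j\<in>UNIV. B i j)" using r by simp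
    also have "\<dots> = (\<Sum>i\<in>I c. \<Sum>j\<in>J c. B i j)"
    proof (rule sum.cong[OF refl])
      fix i assume "i \<in> I c"
      then show "(\<Sum>j\<in>UNIV. B i j) = (\<Sum>j\<in>J c. B i j)"
        by (intro sum.mono_neutral_right) (auto simp: I_def J_def dest: supp)
    qed
    also have "\<dots> = (\<Sum>j\<in>J c. \<Sum>i\<in>I c. B i j)" by (rule sum.swap)
    also have "\<dots> = (\<Sum>j\<in>J c. \<Sum>i\<in>UNIV. B i j)"
    proof (rule sum.cong[OF refl])
      fix j assume j: "j \<in> J c"
      have "i \<in> I c" if "B i j \<noteq> 0" for i
      proof -
        have "a i * b j = 1" "c * b j = 1" using supp[OF that] j by (auto simp: J_def)
        then have "a i = c" using bpos[of j] by (metis mult_right_cancel order_less_irrefl)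
        then show ?thesis by (simp add: I_def)
      qed
      then show "(\<Sum>i\<in>I c. B i j) = (\<Sum>i\<in>UNIV. B i j)"
        by (intro sum.mono_neutral_right[symmetric]) auto
    qed
    also have "\<dots> = real (card (J c))" using c by simp
    finally show ?thesis by simp
  qed
  have "\<forall>c. \<exists>f. bij_betw f (I c) (J c)"
    using card_eq by (auto intro!: finite_same_card_bij)
  then obtain f where f: "\<And>c. bij_betw (f c) (I c) (J c)" by metis
  define \<sigma> where "\<sigma> i = f (a i) i" for i
  have inJ: "\<sigma> i \<in> J (a i)" for i
    using f[of "a i"] unfolding \<sigma>_def bij_betw_def by (auto simp: I_def)
  then have propa: "a i * b (\<sigma> i) = 1" for i by (simp add: J_def)
  have "inj \<sigma>"
  proof (rule injI)
    fix i i' assume eq: "\<sigma> i = \<sigma> i'"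
    have "a i * b (\<sigma> i) = a i' * b (\<sigma> i)" using propa[of i] propa[of i'] eq by simp
    then have "a i = a i'" using bpos[of "\<sigma> i"] by simp
    then have "f (a i) i = f (a i) i'" using eq by (simp add: \<sigma>_def)
    moreover have "inj_on (f (a i)) (I (a i))" using f bij_betw_def by blast
    moreover have "i \<in> I (a i)" "i' \<in> I (a i)" using \<open>a i = a i'\<close> by (auto simp: I_def)
    ultimately show "i = i'" by (meson inj_onD)
  qed
  then have "bij \<sigma>" using finite_UNIV_inj_surj[of \<sigma>] by (simp add: bij_def)
  then have "\<sigma> permutes UNIV" by (intro bij_imp_permutes) auto
  then show ?thesis using propa by blast
qed

theorem lemma3p8:
  fixes x y :: "'n::finite \<Rightarrow> real"
  shows "(\<exists>U V :: complex^'n^'n. unitary_mat U \<and> unitary_mat V \<and>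
            real_diag x ** U ** real_diag y = V)
     \<longleftrightarrow> (\<exists>\<sigma>. \<sigma> permutes (UNIV :: 'n set) \<and> (\<forall>i. \<bar>x i * y (\<sigma> i)\<bar> = 1))"
proof
  assume "\<exists>U V :: complex^'n^'n. unitary_mat U \<and> unitary_mat V \<and> real_diag x ** U ** real_diag y = V"
  then obtain U V :: "complex^'n^'n" where U: "unitary_mat U" and V: "unitary_mat V"
    and eq: "real_diag x ** U ** real_diag y = V" by blast
  have Ve: "(cmod (V$i$j))^2 = (x i)^2 * (cmod (U$i$j))^2 * (y j)^2" for i j
    using diag_entry[of x U y i j] eq by (simp add: norm_mult power_mult_distrib)
  obtain \<sigma> where p: "\<sigma> permutes (UNIV::'n set)" and s: "\<forall>i. (x i)^2 * (y (\<sigma> i))^2 = 1"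
    using core[of "\<lambda>i j. (cmod (U$i$j))^2" "\<lambda>i. (x i)^2" "\<lambda>j. (y j)^2"]
      unitary_sums[OF U] unitary_sums[OF V] by (simp add: Ve) blast
  have "\<bar>x i * y (\<sigma> i)\<bar> = 1" for i
  proof -
    have "\<bar>x i * y (\<sigma> i)\<bar>^2 = 1" using s[rule_format, of i] by (simp add: power_mult_distrib)
    then show ?thesis by (auto simp add: power2_eq_1_iff)
  qed
  then show "\<exists>\<sigma>. \<sigma> permutes (UNIV :: 'n set) \<and> (\<forall>i. \<bar>x i * y (\<sigma> i)\<bar> = 1)" using p by blast
next
  assume "\<exists>\<sigma>. \<sigma> permutes (UNIV :: 'n set) \<and> (\<forall>i. \<bar>x i * y (\<sigma> i)\<bar> = 1)"
  then obtain \<sigma> where p: "\<sigma> permutes (UNIV :: 'n set)" and s: "\<And>i. \<bar>x i * y (\<sigma> i)\<bar> = 1" by blast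
  define U :: "complex^'n^'n" where "U = (\<chi> i j. if j = \<sigma> i then 1 else 0)"
  define V :: "complex^'n^'n" where "V = (\<chi> i j. if j = \<sigma> i then complex_of_real (x i * y (\<sigma> i)) else 0)"
  have "unitary_mat U" unfolding U_def by (rule perm_unitary[OF p]) simp
  moreover have "unitary_mat V" unfolding V_def by (rule perm_unitary[OF p]) (simp add: s norm_mult abs_mult[symmetric])
  moreover have "real_diag x ** U ** real_diag y = V"
    by (simp add: vec_eq_iff diag_entry) (simp add: U_def V_def)
  ultimately show "\<exists>U V :: complex^'n^'n. unitary_mat U \<and> unitary_mat V \<and> real_diag x ** U ** real_diag y = V"
    by blast
qed

end
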